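(* Let $(V,\phi)$ be a unitary vertex operator superalgebra. Then $V$ is self-dual, i.e. $V$ is isomorphic, as a $V$-module, to its contragredient module $V'$.
   Context: A vertex operator superalgebra (VOSA) $(V,Y,\mathbf 1,\omega)$ is a $\mathbb Z_2$-graded space $V=V_{\bar0}\oplus V_{\bar1}$ with vertex operators $Y(v,z)=\sum v_nz^{-n-1}$, vacuum $\mathbf 1$ and conformal vector $\omega$ with $L(n)=\omega_{n+1}$ satisfying the Virasoro relations, the $L(-1)$-derivative property, a grading $V=\bigoplus_{n\in\frac12\mathbb Z}V_n$ ($V_{\bar0}$ = integer weights, $V_{\bar1}$ = half-odd weights, $L(0)|_{V_n}=n$, finite-dimensional, zero for $n\ll0$), truncation, vacuum and creation axioms, and the super Jacobi identity with sign $(-1)^{[u][v]}$. An anti-linear involution $\phi$ of $V$ is an anti-linear bijection of order 2 with $\phi(\mathbf 1)=\mathbf 1$, $\phi(\omega)=\omega$, $\phi(u_nv)=\phi(u)_n\phi(v)$. $(V,\phi)$ is unitary if there is a positive definite Hermitian form $(\,,)$ on $V$ with $(Y(e^{zL(1)}(-1)^{L(0)+2L(0)^2}z^{-2L(0)}a,z^{-1})u,v)=(u,Y(\phi(a),z)v)$ for all $a,u,v\in V$. For a $V$-module $M=\bigoplus_{\lambda\in\mathbb C}M_\lambda$ (graded by $L(0)$-eigenvalues), the contragredient module is $M'=\bigoplus_\lambda M_\lambda^*$ with $\langle Y'(a,z)w',w\rangle=\langle w',Y(e^{zL(1)}(-1)^{L(0)+2L(0)^2}z^{-2L(0)}a,z^{-1})w\rangle$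 for $a\in V$, $w\in M$, $w'\in M'$. *)

theory Defs
  imports Complex_Main "HOL-Library.Groups_Big_Fun"
begin

text \<open>
  The vertex operator Y(u,z) = sum_n u_n z^(-n-1) is given by its modes
  Y u n v = u_n v  (n an integer).  Weights lie in (1/2)Z; the weight-(k/2) space is
  indexed by the integer k.
\<close>

definition Lop :: "('v \<Rightarrow> int \<Rightarrow> 'v \<Rightarrow> 'v) \<Rightarrow> 'v \<Rightarrow> int \<Rightarrow> 'v \<Rightarrow> 'v" where
  "Lop Y om n = Y om (n + 1)"

definition wsp :: "(complex \<Rightarrow> 'v \<Rightarrow> 'v) \<Rightarrow> ('v \<Rightarrow> int \<Rightarrow> 'v \<Rightarrow> 'v) \<Rightarrow> 'v \<Rightarrow> int \<Rightarrow> 'v set" where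
  "wsp smul Y om k = {v. Lop Y om 0 v = smul (of_int k / 2) v}"

text \<open>Parity: p = 0 means v lies in V_0bar (sum of integer-weight spaces),
  p = 1 means v lies in V_1bar (sum of half-odd-weight spaces).\<close>
definition parity_hom :: "(complex \<Rightarrow> 'v \<Rightarrow> 'v::ab_group_add) \<Rightarrow> ('v \<Rightarrow> int \<Rightarrow> 'v \<Rightarrow> 'v) \<Rightarrow> 'v \<Rightarrow> int \<Rightarrow> 'v \<Rightarrow> bool" where
  "parity_hom smul Y om p v \<longleftrightarrow>
     (\<exists>K c. finite K \<and> (\<forall>k\<in>K. k mod 2 = p \<and> c k \<in> wsp smul Y om k) \<and> v = (\<Sum>k\<in>K. c k))"

definition VOSA :: "(complex \<Rightarrow> 'v \<Rightarrow> 'v::ab_group_add) \<Rightarrow> ('v \<Rightarrow> int \<Rightarrow> 'v \<Rightarrow> 'v) \<Rightarrow> 'v \<Rightarrow> 'v \<Rightarrow> bool" where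
  "VOSA smul Y vac om \<longleftrightarrow>
     vector_space smul
     \<comment> \<open>vertex operators are bilinear\<close>
   \<and> (\<forall>a b n v. Y (a + b) n v = Y a n v + Y b n v)
   \<and> (\<forall>c a n v. Y (smul c a) n v = smul c (Y a n v))
   \<and> (\<forall>a n u v. Y a n (u + v) = Y a n u + Y a n v)
   \<and> (\<forall>a n c v. Y a n (smul c v) = smul c (Y a n v))
     \<comment> \<open>Virasoro relations with some central charge\<close>
   \<and> (\<exists>cc::complex. \<forall>m n v.
        Lop Y om m (Lop Y om n v) - Lop Y om n (Lop Y om m v)
        = smul (of_int (m - n)) (Lop Y om (m + n) v)
          + (if m + n = 0 then smul ((of_int m ^ 3 - of_int m) / 12 * cc) v else 0))
     \<comment> \<open>L(-1)-derivative property: Y(L(-1)u,z) = d/dz Y(u,z)\<close>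
   \<and> (\<forall>u n v. Y (Lop Y om (-1) u) n v = smul (- of_int n) (Y u (n - 1) v))
     \<comment> \<open>grading: V = direct sum of V_{k/2}, k integer\<close>
   \<and> (\<forall>v. \<exists>K c. finite K \<and> (\<forall>k\<in>K. c k \<in> wsp smul Y om k) \<and> v = (\<Sum>k\<in>K. c k))
   \<and> (\<forall>k. \<exists>B. finite B \<and> wsp smul Y om k \<subseteq> module.span smul B)
   \<and> (\<exists>k0. \<forall>k<k0. wsp smul Y om k = {0})
     \<comment> \<open>truncation\<close>
   \<and> (\<forall>u v. \<exists>N. \<forall>n\<ge>N. Y u n v = 0)
     \<comment> \<open>vacuum axiom: Y(1,z) = id\<close>
   \<and> (\<forall>n v. Y vac n v = (if n = -1 then v else 0))
     \<comment> \<open>creation axiom\<close>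
   \<and> (\<forall>u n. n \<ge> 0 \<longrightarrow> Y u n vac = 0)
   \<and> (\<forall>u. Y u (-1) vac = u)
     \<comment> \<open>super Jacobi identity, in component (Borcherds) form\<close>
   \<and> (\<forall>u v w p q m n l. parity_hom smul Y om p u \<longrightarrow> parity_hom smul Y om q v \<longrightarrow>
        Sum_any (\<lambda>i::nat. smul (of_int m gchoose i) (Y (Y u (l + int i) v) (m + n - int i) w))
      = Sum_any (\<lambda>i::nat. smul ((-1) ^ i * (of_int l gchoose i))
            (Y u (m + l - int i) (Y v (n + int i) w)
             - smul ((-1) ^ nat \<bar>l\<bar> * (-1) ^ nat (p * q)) (Y v (n + l - int i) (Y u (m + int i) w)))))"

text \<open>For a of weight k/2, the z^(-n-1) coefficient of
  Y(e^{zL(1)} (-1)^{L(0)+2L(0)^2} z^{-2L(0)} a, z^{-1}) applied to w.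
  Here (-1)^{h+2h^2} with h = k/2 equals (-1)^{k(k+1)/2}, and the coefficient is
  sum_j (-1)^{k(k+1)/2}/j! (L(1)^j a)_{k-n-2-j} w.\<close>
definition opp_mode :: "(complex \<Rightarrow> 'v \<Rightarrow> 'v::ab_group_add) \<Rightarrow> ('v \<Rightarrow> int \<Rightarrow> 'v \<Rightarrow> 'v) \<Rightarrow> 'v \<Rightarrow> 'v \<Rightarrow> int \<Rightarrow> int \<Rightarrow> 'v \<Rightarrow> 'v" where
  "opp_mode smul Y om a k n w =
     Sum_any (\<lambda>j::nat. smul ((-1) ^ nat (k * (k + 1) div 2) / of_nat (fact j))
                       (Y ((Lop Y om 1 ^^ j) a) (k - n - 2 - int j) w))"

definition antilinear_involution :: "(complex \<Rightarrow> 'v \<Rightarrow> 'v::ab_group_add) \<Rightarrow> ('v \<Rightarrow> int \<Rightarrow> 'v \<Rightarrow> 'v) \<Rightarrow> 'v \<Rightarrow> 'v \<Rightarrow> ('v \<Rightarrow> 'v) \<Rightarrow> bool" where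
  "antilinear_involution smul Y vac om phi \<longleftrightarrow>
     (\<forall>a b. phi (a + b) = phi a + phi b)
   \<and> (\<forall>c a. phi (smul c a) = smul (cnj c) (phi a))
   \<and> (\<forall>a. phi (phi a) = a)
   \<and> phi vac = vac \<and> phi om = om
   \<and> (\<forall>u n v. phi (Y u n v) = Y (phi u) n (phi v))"

definition pos_def_hermitian :: "(complex \<Rightarrow> 'v \<Rightarrow> 'v::ab_group_add) \<Rightarrow> ('v \<Rightarrow> 'v \<Rightarrow> complex) \<Rightarrow> bool" where
  "pos_def_hermitian smul B \<longleftrightarrow>
     (\<forall>u v w. B (u + v) w = B u w + B v w)
   \<and> (\<forall>c u w. B (smul c u) w = c * B u w)
   \<and> (\<forall>u v. B v u = cnj (B u v))
   \<and> (\<forall>v. v \<noteq> 0 \<longrightarrow> B v v \<in> \<real> \<and> Re (B v v) > 0)"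

definition unitary_VOSA :: "(complex \<Rightarrow> 'v \<Rightarrow> 'v::ab_group_add) \<Rightarrow> ('v \<Rightarrow> int \<Rightarrow> 'v \<Rightarrow> 'v) \<Rightarrow> 'v \<Rightarrow> 'v \<Rightarrow> ('v \<Rightarrow> 'v) \<Rightarrow> bool" where
  "unitary_VOSA smul Y vac om phi \<longleftrightarrow>
     VOSA smul Y vac om \<and> antilinear_involution smul Y vac om phi
   \<and> (\<exists>B. pos_def_hermitian smul B
        \<and> (\<forall>a k n u v. a \<in> wsp smul Y om k \<longrightarrow>
              B (opp_mode smul Y om a k n u) v = B u (Y (phi a) n v)))"

text \<open>The contragredient module V' = direct sum of the duals V_lambda^*, realised as the
  linear functionals on V vanishing on all but finitely many weight spaces.\<close>
definition contragredient :: "(complex \<Rightarrow> 'v \<Rightarrow> 'v::ab_group_add) \<Rightarrow> ('v \<Rightarrow> int \<Rightarrow> 'v \<Rightarrow> 'v) \<Rightarrow> 'v \<Rightarrow> ('v \<Rightarrow> complex) set" where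
  "contragredient smul Y om =
     {f. (\<forall>u v. f (u + v) = f u + f v) \<and> (\<forall>c u. f (smul c u) = c * f u)
       \<and> (\<exists>K. finite K \<and> (\<forall>k. k \<notin> K \<longrightarrow> (\<forall>v\<in>wsp smul Y om k. f v = 0)))}"

text \<open>Vertex operator of V' on a homogeneous a of weight k/2:
  <a'_n f, w> = <f, coefficient of z^(-n-1) in Y(e^{zL(1)}(-1)^{L(0)+2L(0)^2} z^{-2L(0)} a, z^{-1}) w>.\<close>
definition contra_mode :: "(complex \<Rightarrow> 'v \<Rightarrow> 'v::ab_group_add) \<Rightarrow> ('v \<Rightarrow> int \<Rightarrow> 'v \<Rightarrow> 'v) \<Rightarrow> 'v \<Rightarrow> 'v \<Rightarrow> int \<Rightarrow> int \<Rightarrow> ('v \<Rightarrow> complex) \<Rightarrow> ('v \<Rightarrow> complex)" where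
  "contra_mode smul Y om a k n f = (\<lambda>w. f (opp_mode smul Y om a k n w))"

definition self_dual :: "(complex \<Rightarrow> 'v \<Rightarrow> 'v::ab_group_add) \<Rightarrow> ('v \<Rightarrow> int \<Rightarrow> 'v \<Rightarrow> 'v) \<Rightarrow> 'v \<Rightarrow> bool" where
  "self_dual smul Y om \<longleftrightarrow>
     (\<exists>F :: 'v \<Rightarrow> ('v \<Rightarrow> complex).
        bij_betw F UNIV (contragredient smul Y om)
      \<and> (\<forall>u v w. F (u + v) w = F u w + F v w)
      \<and> (\<forall>c u w. F (smul c u) w = c * F u w)
      \<and> (\<forall>a k n u. a \<in> wsp smul Y om k \<longrightarrow>
            F (Y a n u) = contra_mode smul Y om a k n (F u)))"

end

theory Submission
  imports Defs
begin

lemma herm_facts: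
  assumes H: "pos_def_hermitian smul B" and vs: "vector_space smul"
  shows "B u (v + w) = B u v + B u w" "B u (smul c v) = cnj c * B u v"
    "B (u - v) w = B u w - B v w" "B u (v - w) = B u v - B u w"
    "B 0 w = 0" "B w 0 = 0" "B (- u) w = - B u w"
    "B v v = 0 \<longleftrightarrow> v = 0" "B v v = of_real (Re (B v v))"
proof -
  have a1: "\<And>u v w. B (u + v) w = B u w + B v w" and s1: "\<And>c u w. B (smul c u) w = c * B u w"
   and hc: "\<And>u v. B v u = cnj (B u v)" and pd: "\<And>v. v \<noteq> 0 \<Longrightarrow> B v v \<in> \<real> \<and> Re (B v v) > 0"
    using H unfolding pos_def_hermitian_def by blast+
  interpret A: additive "\<lambda>x. B x w" for w by unfold_locales (rule a1)
  show "B (u - v) w = B u w - B v w" by (rule A.diff)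
  show z: "B 0 w = 0" by (rule A.zero)
  show "B (- u) w = - B u w" by (rule A.minus)
  show "B u (v + w) = B u v + B u w" by (metis hc a1 complex_cnj_add)
  show "B u (smul c v) = cnj c * B u v" by (metis hc s1 complex_cnj_mult)
  show "B u (v - w) = B u v - B u w" by (metis hc A.diff complex_cnj_diff)
  show "B w 0 = 0" by (metis hc z complex_cnj_zero)
  show "B v v = 0 \<longleftrightarrow> v = 0" using pd[of v] A.zero[of v] by (cases "v = 0") auto
  show "B v v = of_real (Re (B v v))"
  proof (cases "v = 0")
    case True thus ?thesis using A.zero[of 0] by simp
  next
    case False thus ?thesis using pd[of v] by (simp add: complex_is_Real_iff complex_eq_iff)
  qed
qed

lemma riesz:
  assumes H: "pos_def_hermitian smul B" and vs: "vector_space smul" and fin: "finite S"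
  shows "\<forall>f. (\<forall>u v. f (u+v) = f u + f v) \<longrightarrow> (\<forall>c u. f (smul c u) = c * f u) \<longrightarrow>
     (\<exists>r \<in> module.span smul S. \<forall>s \<in> module.span smul S. f s = B s r)"
  using fin
proof (induction S rule: finite_induct)
  interpret V: vector_space smul by (rule vs)
  case empty
  show ?case
  proof (intro allI impI)
    fix f :: "'a \<Rightarrow> complex"
    assume fa: "\<forall>u v. f (u+v) = f u + f v"
    interpret F: additive f by unfold_locales (use fa in blast)
    show "\<exists>r\<in>V.span {}. \<forall>s\<in>V.span {}. f s = B s r"
      using herm_facts[OF H vs] F.zero by (auto intro!: bexI[of _ 0])
  qed
next
  interpret V: vector_space smul by (rule vs)
  case (insert x S)
  note hf = herm_facts[OF H vs]
  have a1: "\<And>u v w. B (u + v) w = B u w + B v w" and s1: "\<And>c u w. B (smul c u) w = c * B u w"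
   and hc: "\<And>u v. B v u = cnj (B u v)"
    using H unfolding pos_def_hermitian_def by blast+
  show ?case
  proof (intro allI impI)
    fix f :: "'a \<Rightarrow> complex"
    assume fa: "\<forall>u v. f (u+v) = f u + f v" and fs: "\<forall>c u. f (smul c u) = c * f u"
    interpret F: additive f by unfold_locales (use fa in blast)
    obtain r where r: "r \<in> V.span S" "\<forall>s \<in> V.span S. f s = B s r"
      using insert.IH fa fs by blast
    obtain p where p: "p \<in> V.span S" "\<forall>s \<in> V.span S. B s x = B s p"
      using insert.IH[rule_format, of "\<lambda>w. B w x"] a1 s1 by blast
    define x' where "x' = x - p"
    define c where "c = cnj (f x') / B x' x'"
    have ox: "\<And>s. s \<in> V.span S \<Longrightarrow> B s x' = 0" using p hf(4) unfolding x'_def by simp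
    have ox2: "\<And>s. s \<in> V.span S \<Longrightarrow> B x' s = 0" using ox hc by (metis complex_cnj_zero)
    have key: "cnj c * B x' x' = f x'"
    proof (cases "x' = 0")
      case True thus ?thesis using F.zero hf(6) by simp
    next
      case False
      hence nz: "B x' x' \<noteq> 0" using hf(8) by blast
      have "cnj (B x' x') = B x' x'" using hf(9)[of x'] by (metis complex_cnj_complex_of_real)
      thus ?thesis using nz unfolding c_def by (simp add: field_simps)
    qed
    have xin: "x' \<in> V.span (insert x S)" unfolding x'_def
      by (meson V.span_base V.span_diff V.span_mono insertI1 p(1) subset_insertI subsetD)
    show "\<exists>r \<in> V.span (insert x S). \<forall>s \<in> V.span (insert x S). f s = B s r"
    proof (intro bexI ballI)
      show "r + smul c x' \<in> V.span (insert x S)"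
        by (meson V.span_add V.span_scale V.span_mono r(1) subset_insertI subsetD xin)
      fix y assume "y \<in> V.span (insert x S)"
      then obtain a where a: "y - smul a x \<in> V.span S" using V.span_breakdown_eq by blast
      define t where "t = y - smul a x'"
      have "t = (y - smul a x) + smul a p" unfolding t_def x'_def by (simp add: V.scale_right_diff_distrib)
      hence tin: "t \<in> V.span S" using a p(1) by (simp add: V.span_add V.span_scale)
      have y: "y = smul a x' + t" unfolding t_def by simp
      have "f y = a * f x' + f t" unfolding y using fa fs by simp
      also have "\<dots> = a * (cnj c * B x' x') + B t r" using key r(2) tin by simp
      also have "\<dots> = B y (r + smul c x')"
        unfolding y using ox[OF tin] ox2[OF r(1)] by (simp add: a1 s1 hf(1,2) algebra_simps)
      finally show "f y = B y (r + smul c x')" .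
    qed
  qed
qed

lemma herm_sum:
  assumes H: "pos_def_hermitian smul B" and vs: "vector_space smul"
  shows "B w (sum d A) = (\<Sum>j\<in>A. B w (d j))" "B (sum d A) w = (\<Sum>j\<in>A. B (d j) w)"
proof -
  interpret A1: additive "B w" by unfold_locales (rule herm_facts(1)[OF H vs])
  have a1: "\<And>u v w. B (u + v) w = B u w + B v w" using H unfolding pos_def_hermitian_def by blast
  interpret A2: additive "\<lambda>x. B x w" by unfold_locales (rule a1)
  show "B w (sum d A) = (\<Sum>j\<in>A. B w (d j))" by (rule A1.sum)
  show "B (sum d A) w = (\<Sum>j\<in>A. B (d j) w)" by (rule A2.sum)
qed

theorem mainTheorem2:
  fixes smul :: "complex \<Rightarrow> 'v::ab_group_add \<Rightarrow> 'v"
    and Y :: "'v \<Rightarrow> int \<Rightarrow> 'v \<Rightarrow> 'v"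
    and vac om :: 'v
    and phi :: "'v \<Rightarrow> 'v"
  assumes "unitary_VOSA smul Y vac om phi"
  shows "self_dual smul Y om"
proof -
  have V: "VOSA smul Y vac om" and AI: "antilinear_involution smul Y vac om phi"
    using assms unfolding unitary_VOSA_def by blast+
  obtain B where H: "pos_def_hermitian smul B" and inv: "\<And>a k n u v. a \<in> wsp smul Y om k \<Longrightarrow>
              B (opp_mode smul Y om a k n u) v = B u (Y (phi a) n v)"
    using assms unfolding unitary_VOSA_def by blast
  have vs: "vector_space smul" using V unfolding VOSA_def by blast
  interpret VS: vector_space smul by (rule vs)
  note hf = herm_facts[OF H vs]
  note hs = herm_sum[OF H vs]
  have a1: "\<And>u v w. B (u + v) w = B u w + B v w" and s1: "\<And>c u w. B (smul c u) w = c * B u w"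
   and hc: "\<And>u v. B v u = cnj (B u v)"
    using H unfolding pos_def_hermitian_def by blast+
  have VV: "(\<forall>a b n v. Y (a + b) n v = Y a n v + Y b n v) \<and> (\<forall>a n u v. Y a n (u + v) = Y a n u + Y a n v)"
    using V unfolding VOSA_def by (elim conjE) (intro conjI; assumption)
  hence Ya1: "\<And>a b n v. Y (a + b) n v = Y a n v + Y b n v"
   and Ya3: "\<And>a n u v. Y a n (u + v) = Y a n u + Y a n v" by blast+
  have VV2: "(\<exists>cc::complex. \<forall>m n v.
        Lop Y om m (Lop Y om n v) - Lop Y om n (Lop Y om m v)
        = smul (of_int (m - n)) (Lop Y om (m + n) v)
          + (if m + n = 0 then smul ((of_int m ^ 3 - of_int m) / 12 * cc) v else 0))
   \<and> (\<forall>v. \<exists>K c. finite K \<and> (\<forall>k\<in>K. c k \<in> wsp smul Y om k) \<and> v = (\<Sum>k\<in>K. c k))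
   \<and> (\<forall>k. \<exists>B. finite B \<and> wsp smul Y om k \<subseteq> module.span smul B)
   \<and> (\<forall>u n. n \<ge> 0 \<longrightarrow> Y u n vac = 0)
   \<and> (\<forall>u. Y u (-1) vac = u)"
    using V unfolding VOSA_def by (elim conjE) (intro conjI; assumption)
  then obtain cc where vir: "\<And>m n v. Lop Y om m (Lop Y om n v) - Lop Y om n (Lop Y om m v)
        = smul (of_int (m - n)) (Lop Y om (m + n) v)
          + (if m + n = 0 then smul ((of_int m ^ 3 - of_int m) / 12 * cc) v else 0)"
    by blast
  have dec: "\<And>v. \<exists>K c. finite K \<and> (\<forall>k\<in>K. c k \<in> wsp smul Y om k) \<and> v = (\<Sum>k\<in>K. c k)"
   and fd: "\<And>k. \<exists>B. finite B \<and> wsp smul Y om k \<subseteq> module.span smul B"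
   and cr1: "\<And>u n. n \<ge> 0 \<Longrightarrow> Y u n vac = 0" and cr2: "\<And>u. Y u (-1) vac = u"
    using VV2 by blast+
  have phia: "\<And>a b. phi (a + b) = phi a + phi b" and phis: "\<And>c a. phi (smul c a) = smul (cnj c) (phi a)"
   and phiphi: "\<And>a. phi (phi a) = a" and phiom: "phi om = om"
   and phiY: "\<And>u n v. phi (Y u n v) = Y (phi u) n (phi v)"
    using AI unfolding antilinear_involution_def by blast+
  interpret PA: additive phi by unfold_locales (rule phia)
  have Y0: "\<And>n v. Y 0 n v = 0"
  proof -
    fix n v
    interpret YA: additive "\<lambda>a. Y a n v" by unfold_locales (rule Ya1)
    show "Y 0 n v = 0" by (rule YA.zero)
  qed
  have Y03: "\<And>a n. Y a n 0 = 0"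
  proof -
    fix a n
    interpret YA: additive "Y a n" by unfold_locales (rule Ya3)
    show "Y a n 0 = 0" by (rule YA.zero)
  qed
  \<comment> \<open>L(1) om = 0 and om has weight 2\<close>
  have L1om: "Y om 2 om = 0"
    using vir[of 1 "-2" vac] cr1[of 2 om] cr1[of 0 om] cr2[of om] Y03
    by (simp add: Lop_def)
  have L0om: "Y om 1 om = smul 2 om"
    using vir[of 0 "-2" vac] cr1[of 1 om] cr2[of om] Y03
    by (simp add: Lop_def)
  have omw: "om \<in> wsp smul Y om 4" unfolding wsp_def Lop_def using L0om by simp
  have pw0: "\<And>j. ((Lop Y om 1) ^^ j) 0 = 0"
  proof -
    fix j show "((Lop Y om 1) ^^ j) 0 = 0" by (induction j) (auto simp: Lop_def Y03)
  qed
  have opp: "opp_mode smul Y om om 4 1 u = Y om 1 u" for u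
  proof -
    have "(\<lambda>j::nat. smul ((-1) ^ nat (4 * (4 + 1) div 2) / of_nat (fact j))
                       (Y ((Lop Y om 1 ^^ j) om) (4 - 1 - 2 - int j) u))
        = (\<lambda>j. if j = 0 then Y om 1 u else 0)"
    proof
      fix j :: nat show "smul ((-1) ^ nat (4 * (4 + 1) div 2) / of_nat (fact j))
                       (Y ((Lop Y om 1 ^^ j) om) (4 - 1 - 2 - int j) u) = (if j = 0 then Y om 1 u else 0)"
      proof (cases j)
        case 0 thus ?thesis by simp
      next
        case (Suc i)
        have "(Lop Y om 1 ^^ j) om = 0" unfolding Suc funpow_Suc_right
          using pw0 L1om by (simp add: Lop_def)
        thus ?thesis using Suc Y0 by simp
      qed
    qed
    note e = this
    show ?thesis unfolding opp_mode_def e by simp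
  qed
  have L0sym: "B (Y om 1 u) v = B u (Y om 1 v)" for u v
    using inv[OF omw, of 1 u v] opp phiom by simp
  have orth: "B u v = 0" if "u \<in> wsp smul Y om k" "v \<in> wsp smul Y om l" "k \<noteq> l" for u v k l
  proof -
    have "Y om 1 u = smul (of_int k / 2) u" "Y om 1 v = smul (of_int l / 2) v"
      using that unfolding wsp_def Lop_def by simp_all
    hence "(of_int k / 2) * B u v = (of_int l / 2) * B u v"
      using L0sym[of u v] s1 hf(2) by simp
    hence "(of_int k - of_int l) * B u v = 0" by (simp add: algebra_simps)
    thus ?thesis using that(3) by simp
  qed
  have phiw: "phi c \<in> wsp smul Y om k" if "c \<in> wsp smul Y om k" for c k
    using that phiY[of om 1 c] phiom phis unfolding wsp_def Lop_def by simp
  have bsum: "B w (sum d A) = (if k \<in> A then B w (d k) else 0)"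
    if "w \<in> wsp smul Y om k" "finite A" "\<forall>j\<in>A. d j \<in> wsp smul Y om j" for w k d A
  proof -
    have "B w (sum d A) = (\<Sum>j\<in>A. if k = j then B w (d j) else 0)"
      unfolding hs(1) using that by (intro sum.cong) (auto intro: orth)
    thus ?thesis using that(2) by simp
  qed
  define F where "F u = (\<lambda>w. B w (phi u))" for u
  have Fc: "F u \<in> contragredient smul Y om" for u
  proof -
    obtain K c where K: "finite K" "\<forall>k\<in>K. c k \<in> wsp smul Y om k" "u = (\<Sum>k\<in>K. c k)"
      using dec by blast
    have pu: "phi u = (\<Sum>k\<in>K. phi (c k))" using K(3) PA.sum by simp
    have "\<forall>k. k \<notin> K \<longrightarrow> (\<forall>v\<in>wsp smul Y om k. F u v = 0)"
      unfolding F_def pu using bsum K phiw by (metis (no_types, lifting))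
    thus ?thesis unfolding contragredient_def F_def using K(1) a1 s1 by blast
  qed
  have inj: "inj F"
  proof
    fix u v assume "F u = F v"
    hence e: "\<And>w. B w (phi u) = B w (phi v)" unfolding F_def by metis
    have "B (phi u - phi v) (phi u - phi v) = 0" using e hf(4) by simp
    hence "phi u = phi v" using hf(8) by simp
    thus "u = v" using phiphi by metis
  qed
  have surj: "f \<in> F ` UNIV" if f: "f \<in> contragredient smul Y om" for f
  proof -
    have fa: "\<forall>u v. f (u+v) = f u + f v" and fs: "\<forall>c u. f (smul c u) = c * f u"
      using f unfolding contragredient_def by blast+
    obtain K where K: "finite K" "\<forall>k. k \<notin> K \<longrightarrow> (\<forall>v\<in>wsp smul Y om k. f v = 0)"
      using f unfolding contragredient_def by blast
    interpret FA: additive f by unfold_locales (use fa in blast)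
    obtain BB where BB: "\<And>k. finite (BB k) \<and> wsp smul Y om k \<subseteq> VS.span (BB k)"
      using fd by metis
    define S where "S = (\<Union>k\<in>K. BB k)"
    have finS: "finite S" unfolding S_def using K(1) BB by blast
    obtain r where r: "\<forall>s\<in>VS.span S. f s = B s r"
      using riesz[OF H vs finS] fa fs by blast
    obtain J d where J: "finite J" "\<forall>j\<in>J. d j \<in> wsp smul Y om j" "r = (\<Sum>j\<in>J. d j)"
      using dec by blast
    define r' where "r' = (\<Sum>j\<in>J \<inter> K. d j)"
    have hom: "f w = B w r'" if w: "w \<in> wsp smul Y om k" for w k
    proof (cases "k \<in> K")
      case True
      have "w \<in> VS.span S" using w True BB[of k] VS.span_mono[of "BB k" S] unfolding S_def by blast
      hence "f w = B w r" using r by blast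
      also have "\<dots> = (if k \<in> J then B w (d k) else 0)" unfolding J(3) using bsum w J by blast
      also have "\<dots> = B w r'" unfolding r'_def using bsum[OF w, of "J \<inter> K" d] J True by simp
      finally show ?thesis .
    next
      case False
      thus ?thesis using K(2) w bsum[OF w, of "J \<inter> K" d] J unfolding r'_def by simp
    qed
    have "f w = B w r'" for w
    proof -
      obtain M e where M: "finite M" "\<forall>m\<in>M. e m \<in> wsp smul Y om m" "w = (\<Sum>m\<in>M. e m)"
        using dec by blast
      have "f w = (\<Sum>m\<in>M. f (e m))" using M(3) FA.sum by simp
      also have "\<dots> = (\<Sum>m\<in>M. B (e m) r')" using M(2) hom by (intro sum.cong) auto
      also have "\<dots> = B w r'" using M(3) hs(2) by metis
      finally show ?thesis .
    qed
    hence "F (phi r') = f" unfolding F_def using phiphi by auto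
    thus ?thesis by blast
  qed
  have "bij_betw F UNIV (contragredient smul Y om)"
    unfolding bij_betw_def using inj Fc surj by blast
  moreover have "\<forall>u v w. F (u + v) w = F u w + F v w" unfolding F_def using phia hf(1) by simp
  moreover have "\<forall>c u w. F (smul c u) w = c * F u w" unfolding F_def using phis hf(2) by simp
  moreover have "\<forall>a k n u. a \<in> wsp smul Y om k \<longrightarrow>
            F (Y a n u) = contra_mode smul Y om a k n (F u)"
    unfolding F_def contra_mode_def using inv phiY by simp
  ultimately show ?thesis unfolding self_dual_def by blast
qed

end
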